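(* Let $n=2k+1$ with $k\ge 1$. If $S$ is a strong resolving set of $U_n$, then $|S|\ge 2n$.
   Context: For $n\ge 3$, $U_n$ is the graph with vertex set $\{a_i,b_i,c_i,d_i,e_i : 1\le i\le n\}$ and edge set $\{a_ia_{i+1}, b_ib_{i+1}, e_ie_{i+1}, a_ib_i, b_ic_i, c_id_i, d_ie_i, c_{i+1}d_i : 1\le i\le n\}$, indices taken modulo $n$. $d$ is the graph distance. A vertex $w$ strongly resolves distinct vertices $u,v$ if $d(v,w)=d(v,u)+d(u,w)$ or $d(u,w)=d(u,v)+d(v,w)$. A set $S$ is a strong resolving set if every two distinct vertices are strongly resolved by some vertex of $S$. *)

theory Defs
  imports Main
begin

text \<open>Vertices of U_n. Index i ranges over 0..n-1 (paper uses 1..n; indices modulo n).\<close>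
datatype vtx = A nat | B nat | C nat | D nat | E nat

definition U_verts :: "nat \<Rightarrow> vtx set" where
  "U_verts n = (\<Union>i\<in>{..<n}. {A i, B i, C i, D i, E i})"

definition U_edge0 :: "nat \<Rightarrow> vtx \<Rightarrow> vtx \<Rightarrow> bool" where
  "U_edge0 n u v \<longleftrightarrow> (\<exists>i<n.
      (u = A i \<and> v = A (Suc i mod n)) \<or>
      (u = B i \<and> v = B (Suc i mod n)) \<or>
      (u = E i \<and> v = E (Suc i mod n)) \<or>
      (u = A i \<and> v = B i) \<or>
      (u = B i \<and> v = C i) \<or>
      (u = C i \<and> v = D i) \<or>
      (u = D i \<and> v = E i) \<or>
      (u = C (Suc i mod n) \<and> v = D i))"

definition U_adj :: "nat \<Rightarrow> vtx \<Rightarrow> vtx \<Rightarrow> bool" where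
  "U_adj n u v \<longleftrightarrow> U_edge0 n u v \<or> U_edge0 n v u"

text \<open>Graph distance: length of a shortest walk (U_n is connected).\<close>
definition U_dist :: "nat \<Rightarrow> vtx \<Rightarrow> vtx \<Rightarrow> nat" where
  "U_dist n u v = (LEAST k. (U_adj n ^^ k) u v)"

definition strongly_resolves :: "nat \<Rightarrow> vtx \<Rightarrow> vtx \<Rightarrow> vtx \<Rightarrow> bool" where
  "strongly_resolves n w u v \<longleftrightarrow>
     U_dist n v w = U_dist n v u + U_dist n u w \<or> U_dist n u w = U_dist n u v + U_dist n v w"

definition strong_resolving_set :: "nat \<Rightarrow> vtx set \<Rightarrow> bool" where
  "strong_resolving_set n S \<longleftrightarrow> S \<subseteq> U_verts n \<and>
     (\<forall>u\<in>U_verts n. \<forall>v\<in>U_verts n. u \<noteq> v \<longrightarrow> (\<exists>w\<in>S. strongly_resolves n w u v))"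

end

theory Submission
  imports Defs
begin

abbreviation R where "R n \<equiv> U_adj n"

lemma adj_sym: "U_adj n u v = U_adj n v u"
  unfolding U_adj_def by blast

lemma vA: "A t \<in> U_verts n \<longleftrightarrow> t < n" by (auto simp: U_verts_def)
lemma vB: "B t \<in> U_verts n \<longleftrightarrow> t < n" by (auto simp: U_verts_def)
lemma vC: "C t \<in> U_verts n \<longleftrightarrow> t < n" by (auto simp: U_verts_def)
lemma vD: "D t \<in> U_verts n \<longleftrightarrow> t < n" by (auto simp: U_verts_def)
lemma vE: "E t \<in> U_verts n \<longleftrightarrow> t < n" by (auto simp: U_verts_def)

lemma adj_verts: "U_adj n u v \<Longrightarrow> u \<in> U_verts n \<and> v \<in> U_verts n"
  unfolding U_adj_def U_edge0_def
  by (elim disjE exE conjE; simp add: vA vB vC vD vE)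

lemma pow_sym: "(U_adj n ^^ m) u v \<Longrightarrow> (U_adj n ^^ m) v u"
proof (induction m arbitrary: u v)
  case 0 then show ?case by simp
next
  case (Suc m)
  then obtain y where "U_adj n u y" "(U_adj n ^^ m) y v" using relpowp_Suc_D2 by metis
  then show ?case using Suc.IH adj_sym relpowp_Suc_I by metis
qed

lemma walk_trans: "(P ^^ a) x y \<Longrightarrow> (P ^^ b) y z \<Longrightarrow> (P ^^ (a+b)) x z"
  by (auto simp: relpowp_add)

lemma walk_edge: "(P::'a\<Rightarrow>'a\<Rightarrow>bool) x y \<Longrightarrow> (P ^^ 1) x y" using relpowp_Suc_I[of 0 P x x y] by simp

lemma dist_sym: "U_dist n u v = U_dist n v u"
proof -
  have "(\<lambda>k. (U_adj n ^^ k) u v) = (\<lambda>k. (U_adj n ^^ k) v u)"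
    using pow_sym by blast
  then show ?thesis unfolding U_dist_def by simp
qed

lemma dist_le: "(U_adj n ^^ m) u v \<Longrightarrow> U_dist n u v \<le> m"
  unfolding U_dist_def by (rule Least_le)

lemma dist_le': "(U_adj n ^^ m) u v \<Longrightarrow> m \<le> L \<Longrightarrow> U_dist n v u \<le> L"
  using dist_le dist_sym by (metis le_trans)

lemma dist_walk: "(U_adj n ^^ m) u v \<Longrightarrow> (U_adj n ^^ U_dist n u v) u v"
  unfolding U_dist_def by (rule LeastI)

lemma lip_bound:
  assumes "\<And>x y. U_adj n x y \<Longrightarrow> h y \<le> h x + 1"
  shows "(U_adj n ^^ m) u v \<Longrightarrow> h v \<le> h u + m"
proof (induction m arbitrary: v)
  case 0 then show ?case by simp
next
  case (Suc m)
  then obtain y where "(U_adj n ^^ m) u y" "U_adj n y v" by auto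
  then show ?case using Suc.IH assms[of y v] by fastforce
qed

lemma dist_lower:
  assumes "\<And>x y. U_adj n x y \<Longrightarrow> h y \<le> h x + 1"
    and "(U_adj n ^^ m) u v"
  shows "h v \<le> h u + U_dist n u v"
  using lip_bound[OF assms(1) dist_walk[OF assms(2)]] .

lemma sucmod: "t < n \<Longrightarrow> Suc t mod n < n" by simp

lemma eAA: "t < n \<Longrightarrow> U_adj n (A t) (A (Suc t mod n))" unfolding U_adj_def U_edge0_def by blast
lemma eBB: "t < n \<Longrightarrow> U_adj n (B t) (B (Suc t mod n))" unfolding U_adj_def U_edge0_def by blast
lemma eEE: "t < n \<Longrightarrow> U_adj n (E t) (E (Suc t mod n))" unfolding U_adj_def U_edge0_def by blast
lemma eAB: "t < n \<Longrightarrow> U_adj n (A t) (B t)" unfolding U_adj_def U_edge0_def by blast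
lemma eBC: "t < n \<Longrightarrow> U_adj n (B t) (C t)" unfolding U_adj_def U_edge0_def by blast
lemma eCD: "t < n \<Longrightarrow> U_adj n (C t) (D t)" unfolding U_adj_def U_edge0_def by blast
lemma eDE: "t < n \<Longrightarrow> U_adj n (D t) (E t)" unfolding U_adj_def U_edge0_def by blast
lemma eCD': "t < n \<Longrightarrow> U_adj n (C (Suc t mod n)) (D t)" unfolding U_adj_def U_edge0_def by blast

lemma wA: "t < n \<Longrightarrow> (U_adj n ^^ m) (A t) (A ((t+m) mod n))"
proof (induction m)
  case 0 then show ?case by simp
next
  case (Suc m)
  have "n > 0" using Suc by simp
  then have "U_adj n (A ((t+m) mod n)) (A (Suc ((t+m) mod n) mod n))" by (intro eAA) simp
  moreover have "Suc ((t+m) mod n) mod n = (t + Suc m) mod n" by (simp add: mod_Suc_eq)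
  ultimately show ?case using Suc relpowp_Suc_I by metis
qed

lemma wB: "t < n \<Longrightarrow> (U_adj n ^^ m) (B t) (B ((t+m) mod n))"
proof (induction m)
  case 0 then show ?case by simp
next
  case (Suc m)
  have "n > 0" using Suc by simp
  then have "U_adj n (B ((t+m) mod n)) (B (Suc ((t+m) mod n) mod n))" by (intro eBB) simp
  moreover have "Suc ((t+m) mod n) mod n = (t + Suc m) mod n" by (simp add: mod_Suc_eq)
  ultimately show ?case using Suc relpowp_Suc_I by metis
qed

lemma wE: "t < n \<Longrightarrow> (U_adj n ^^ m) (E t) (E ((t+m) mod n))"
proof (induction m)
  case 0 then show ?case by simp
next
  case (Suc m)
  have "n > 0" using Suc by simp
  then have "U_adj n (E ((t+m) mod n)) (E (Suc ((t+m) mod n) mod n))" by (intro eEE) simp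
  moreover have "Suc ((t+m) mod n) mod n = (t + Suc m) mod n" by (simp add: mod_Suc_eq)
  ultimately show ?case using Suc relpowp_Suc_I by metis
qed

lemma conn0: "v \<in> U_verts n \<Longrightarrow> \<exists>m. (U_adj n ^^ m) (A 0) v"
proof -
  assume "v \<in> U_verts n"
  then obtain t where t: "t < n" "v \<in> {A t, B t, C t, D t, E t}" unfolding U_verts_def by auto
  have "(U_adj n ^^ t) (A 0) (A t)" using wA[of 0 n t] t by simp
  moreover have "U_adj n (A t) (B t)" "U_adj n (B t) (C t)" "U_adj n (C t) (D t)" "U_adj n (D t) (E t)"
    using t eAB eBC eCD eDE by auto
  ultimately have "(U_adj n ^^ t) (A 0) (A t)" "(U_adj n ^^ Suc t) (A 0) (B t)"
    "(U_adj n ^^ Suc (Suc t)) (A 0) (C t)" "(U_adj n ^^ Suc (Suc (Suc t))) (A 0) (D t)"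
    "(U_adj n ^^ Suc (Suc (Suc (Suc t)))) (A 0) (E t)"
    by (meson relpowp_Suc_I)+
  then show ?thesis using t(2) by blast
qed

lemma conn: "u \<in> U_verts n \<Longrightarrow> v \<in> U_verts n \<Longrightarrow> \<exists>m. (U_adj n ^^ m) u v"
proof -
  assume "u \<in> U_verts n" "v \<in> U_verts n"
  then obtain a b where "(U_adj n ^^ a) (A 0) u" "(U_adj n ^^ b) (A 0) v" using conn0 by blast
  then have "(U_adj n ^^ a) u (A 0)" "(U_adj n ^^ b) (A 0) v" using pow_sym by auto
  then have "(U_adj n ^^ (a+b)) u v" by (rule walk_trans)
  then show ?thesis by blast
qed

lemma not_between:
  assumes uV: "u \<in> U_verts n" and vV: "v \<in> U_verts n" and wV: "w \<in> U_verts n"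
    and wu: "w \<noteq> u"
    and maxd: "\<And>u'. U_adj n u u' \<Longrightarrow> U_dist n v u' \<le> U_dist n v u"
  shows "U_dist n v w \<noteq> U_dist n v u + U_dist n u w"
proof
  assume eq: "U_dist n v w = U_dist n v u + U_dist n u w"
  obtain m where "(U_adj n ^^ m) u w" using conn uV wV by blast
  then have W: "(U_adj n ^^ U_dist n u w) u w" by (rule dist_walk)
  have "U_dist n u w \<noteq> 0" using W wu by (metis relpowp.simps(1) eq_OO)
  then obtain m' where m': "U_dist n u w = Suc m'" by (cases "U_dist n u w") auto
  then obtain u' where u': "U_adj n u u'" "(U_adj n ^^ m') u' w" using W relpowp_Suc_D2 by metis
  have u'V: "u' \<in> U_verts n" using adj_verts u' by blast
  obtain m2 where "(U_adj n ^^ m2) v u'" using conn vV u'V by blast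
  then have "(U_adj n ^^ U_dist n v u') v u'" by (rule dist_walk)
  then have "(U_adj n ^^ (U_dist n v u' + m')) v w" using u' walk_trans by metis
  then have "U_dist n v w \<le> U_dist n v u' + m'" by (rule dist_le)
  then show False using eq m' maxd[OF u'(1)] by simp
qed

lemma pair_forced:
  assumes "u \<in> U_verts n" "v \<in> U_verts n" "w \<in> U_verts n"
    and m1: "\<And>u'. U_adj n u u' \<Longrightarrow> U_dist n v u' \<le> U_dist n v u"
    and m2: "\<And>v'. U_adj n v v' \<Longrightarrow> U_dist n u v' \<le> U_dist n u v"
    and "strongly_resolves n w u v"
  shows "w = u \<or> w = v"
  using assms not_between[of u n v w] not_between[of v n u w]
  unfolding strongly_resolves_def by blast

definition del :: "nat \<Rightarrow> nat \<Rightarrow> nat \<Rightarrow> nat" where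
  "del n c p = (let d = (if c \<le> p then p - c else p + 2*n - c) in min d (2*n - d))"

fun pos :: "vtx \<Rightarrow> nat" where
  "pos (A t) = 2*t" | "pos (B t) = 2*t" | "pos (C t) = 2*t" | "pos (D t) = 2*t+1" | "pos (E t) = 2*t+1"

fun g1 :: "nat \<Rightarrow> nat \<Rightarrow> vtx \<Rightarrow> nat" where
  "g1 n c (A t) = del n c (2*t) div 2"
| "g1 n c (B t) = del n c (2*t) div 2 + 1"
| "g1 n c (C t) = del n c (2*t) div 2 + 2"
| "g1 n c (D t) = del n c (2*t+1) div 2 + 3"
| "g1 n c (E t) = del n c (2*t+1) div 2 + 4"

fun g2 :: "nat \<Rightarrow> nat \<Rightarrow> vtx \<Rightarrow> nat" where
  "g2 n c (A t) = del n c (2*t) div 2 + 2"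
| "g2 n c (B t) = del n c (2*t) div 2 + 1"
| "g2 n c (C t) = min (del n c (2*t)) (del n c (2*t) div 2 + 2)"
| "g2 n c (D t) = min (del n c (2*t+1)) (del n c (2*t+1) div 2 + 2)"
| "g2 n c (E t) = del n c (2*t+1) div 2 + 2"

lemma sucmod_lin: "t < n \<Longrightarrow> Suc t mod n = (if Suc t = n then 0 else Suc t)"
  by (simp add: mod_Suc)

lemma par1: "(d::nat) \<le> 2*n \<Longrightarrow> even (min d (2*n - d)) \<longleftrightarrow> even d" by presburger
lemma par2: "(c::nat) \<le> p \<Longrightarrow> even c \<Longrightarrow> even (p - c) \<longleftrightarrow> even p" by presburger
lemma par3: "(p::nat) < c \<Longrightarrow> c \<le> 2*n \<Longrightarrow> even c \<Longrightarrow> even (p + 2*n - c) \<longleftrightarrow> even p" by presburger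

lemma del_even:
  assumes "p < 2*n" "i < n"
  shows "even (del n (2*i) p) \<longleftrightarrow> even p"
proof (cases "2*i \<le> p")
  case True
  then show ?thesis unfolding del_def Let_def using par1[of "p - 2*i" n] par2[of "2*i" p] assms by simp
next
  case False
  then show ?thesis unfolding del_def Let_def using par1[of "p + 2*n - 2*i" n] par3[of p "2*i" n] assms by simp
qed

lemma del_step:
  assumes "p < 2*n" "i < n"
  shows "del n (2*i) (if Suc p = 2*n then 0 else Suc p) \<le> del n (2*i) p + 1"
    and "del n (2*i) p \<le> del n (2*i) (if Suc p = 2*n then 0 else Suc p) + 1"
  using assms unfolding del_def Let_def min_def by (auto split: if_splits)

lemma loc:
  assumes t: "t < n" and i: "i < n"
  shows "\<exists>x y x' y'. del n (2*i) (2*t) = 2*x \<and> del n (2*i) (2*t+1) = 2*y+1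
     \<and> del n (2*i) (2*(Suc t mod n)) = 2*x' \<and> del n (2*i) (2*(Suc t mod n)+1) = 2*y'+1
     \<and> y \<le> x \<and> x \<le> y+1 \<and> y \<le> x' \<and> x' \<le> y+1 \<and> y' \<le> x' \<and> x' \<le> y'+1"
proof -
  have s1: "(if Suc (2*t) = 2*n then 0 else Suc (2*t)) = 2*t+1" using t by simp
  have s2: "(if Suc (2*t+1) = 2*n then 0 else Suc (2*t+1)) = 2*(Suc t mod n)"
    using t by (simp add: sucmod_lin)
  have lt: "2*(Suc t mod n) < 2*n" using t by simp
  have s3: "(if Suc (2*(Suc t mod n)) = 2*n then 0 else Suc (2*(Suc t mod n))) = 2*(Suc t mod n)+1"
    using lt by simp
  have p1: "2*t < 2*n" "2*t+1 < 2*n" using t by auto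
  have lt2: "2*(Suc t mod n)+1 < 2*n" using lt by simp
  note a = del_step[OF p1(1) i, unfolded s1] del_step[OF p1(2) i, unfolded s2] del_step[OF lt i, unfolded s3]
  have e1: "even (del n (2*i) (2*t))" using del_even[OF p1(1) i] by simp
  have e2: "odd (del n (2*i) (2*t+1))" using del_even[OF p1(2) i] by simp
  have e3: "even (del n (2*i) (2*(Suc t mod n)))" using del_even[OF lt i] by simp
  have e4: "odd (del n (2*i) (2*(Suc t mod n)+1))" using del_even[OF lt2 i] by simp
  obtain x where x: "del n (2*i) (2*t) = 2*x" using e1 by (elim evenE)
  obtain y where y: "del n (2*i) (2*t+1) = 2*y+1" using e2 by (elim oddE)
  obtain x' where x': "del n (2*i) (2*(Suc t mod n)) = 2*x'" using e3 by (elim evenE)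
  obtain y' where y': "del n (2*i) (2*(Suc t mod n)+1) = 2*y'+1" using e4 by (elim oddE)
  show ?thesis using a x y x' y' by (intro exI[of _ x] exI[of _ y] exI[of _ x'] exI[of _ y']) auto
qed

lemma g1_edge0:
  assumes "U_edge0 n u v" "i < n"
  shows "g1 n (2*i) v \<le> g1 n (2*i) u + 1 \<and> g1 n (2*i) u \<le> g1 n (2*i) v + 1"
proof -
  obtain t where t: "t < n" and cases: "(u = A t \<and> v = A (Suc t mod n)) \<or>
      (u = B t \<and> v = B (Suc t mod n)) \<or>
      (u = E t \<and> v = E (Suc t mod n)) \<or>
      (u = A t \<and> v = B t) \<or>
      (u = B t \<and> v = C t) \<or>
      (u = C t \<and> v = D t) \<or>
      (u = D t \<and> v = E t) \<or>
      (u = C (Suc t mod n) \<and> v = D t)" using assms(1) unfolding U_edge0_def by blast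
  obtain x y x' y' where f: "del n (2*i) (2*t) = 2*x" "del n (2*i) (2*t+1) = 2*y+1"
     "del n (2*i) (2*(Suc t mod n)) = 2*x'" "del n (2*i) (2*(Suc t mod n)+1) = 2*y'+1"
     "y \<le> x" "x \<le> y+1" "y \<le> x'" "x' \<le> y+1" "y' \<le> x'" "x' \<le> y'+1"
    using loc[OF t assms(2)] by blast
  from cases show ?thesis using f by (elim disjE conjE) auto
qed

lemma g2_edge0:
  assumes "U_edge0 n u v" "i < n"
  shows "g2 n (2*i) v \<le> g2 n (2*i) u + 1 \<and> g2 n (2*i) u \<le> g2 n (2*i) v + 1"
proof -
  obtain t where t: "t < n" and cases: "(u = A t \<and> v = A (Suc t mod n)) \<or>
      (u = B t \<and> v = B (Suc t mod n)) \<or>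
      (u = E t \<and> v = E (Suc t mod n)) \<or>
      (u = A t \<and> v = B t) \<or>
      (u = B t \<and> v = C t) \<or>
      (u = C t \<and> v = D t) \<or>
      (u = D t \<and> v = E t) \<or>
      (u = C (Suc t mod n) \<and> v = D t)" using assms(1) unfolding U_edge0_def by blast
  obtain x y x' y' where f: "del n (2*i) (2*t) = 2*x" "del n (2*i) (2*t+1) = 2*y+1"
     "del n (2*i) (2*(Suc t mod n)) = 2*x'" "del n (2*i) (2*(Suc t mod n)+1) = 2*y'+1"
     "y \<le> x" "x \<le> y+1" "y \<le> x'" "x' \<le> y+1" "y' \<le> x'" "x' \<le> y'+1"
    using loc[OF t assms(2)] by blast
  from cases show ?thesis using f by (elim disjE conjE) (auto simp: min_def)
qed

lemma g1_lip: "i < n \<Longrightarrow> U_adj n u v \<Longrightarrow> g1 n (2*i) v \<le> g1 n (2*i) u + 1"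
  unfolding U_adj_def using g1_edge0 by blast
lemma g2_lip: "i < n \<Longrightarrow> U_adj n u v \<Longrightarrow> g2 n (2*i) v \<le> g2 n (2*i) u + 1"
  unfolding U_adj_def using g2_edge0 by blast

lemma suc_inj: "x < n \<Longrightarrow> t < n \<Longrightarrow> Suc x mod n = Suc t mod n \<Longrightarrow> x = t"
  by (simp add: sucmod_lin split: if_splits)

lemma M1: assumes "k \<ge> 1" shows "(Suc i mod n + (k-1)) mod n = (i+k) mod n"
proof -
  have "(Suc i mod n + (k-1)) mod n = (Suc i + (k-1)) mod n" by (rule mod_add_left_eq)
  also have "Suc i + (k-1) = i + k" using assms by simp
  finally show ?thesis .
qed

lemma M3: assumes "n = 2*k+1" "i < n" shows "(Suc ((i+k) mod n) mod n + k) mod n = i"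
proof -
  have "(Suc ((i+k) mod n) mod n + k) mod n = (Suc ((i+k) mod n) + k) mod n" by (rule mod_add_left_eq)
  also have "Suc ((i+k) mod n) + k = (i+k) mod n + Suc k" by simp
  also have "((i+k) mod n + Suc k) mod n = (i + k + Suc k) mod n" by (rule mod_add_left_eq)
  also have "i + k + Suc k = i + n" using assms by simp
  also have "(i + n) mod n = i" by (simp only: mod_add_self2 mod_less[OF assms(2)])
  finally show ?thesis .
qed

lemma M5: assumes "n = 2*k+1" "t < n" "Suc t mod n = i" shows "((i+k) mod n + k) mod n = t"
proof -
  have "((i+k) mod n + k) mod n = (i + k + k) mod n" by (rule mod_add_left_eq)
  also have "(i + k + k) mod n = (Suc t mod n + (k+k)) mod n" using assms(3) by (simp add: add.assoc)
  also have "(Suc t mod n + (k+k)) mod n = (Suc t + (k+k)) mod n" by (rule mod_add_left_eq)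
  also have "Suc t + (k+k) = t + n" using assms by simp
  also have "(t + n) mod n = t" by (simp only: mod_add_self2 mod_less[OF assms(2)])
  finally show ?thesis .
qed

lemma M2: assumes "n = 2*k+1" "k \<ge> 1" "t < n" "Suc t mod n = i"
  shows "(Suc ((i+k) mod n) mod n + (k-1)) mod n = t"
proof -
  have "(Suc ((i+k) mod n) mod n + (k-1)) mod n = (Suc ((i+k) mod n) + (k-1)) mod n" by (rule mod_add_left_eq)
  also have "Suc ((i+k) mod n) + (k-1) = (i+k) mod n + k" using assms by simp
  finally show ?thesis using M5[OF assms(1,3,4)] by simp
qed

lemma M4: assumes "n = 2*k+1" "k \<ge> 1" "t < n" "Suc t mod n = (i+k) mod n"
  shows "(i + (k-1)) mod n = t"
proof -
  have "Suc ((i + (k-1)) mod n) mod n = (Suc (i + (k-1))) mod n" by (simp add: mod_Suc_eq)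
  also have "Suc (i + (k-1)) = i + k" using assms by simp
  finally show ?thesis using suc_inj[of "(i + (k-1)) mod n" n t] assms by simp
qed

lemma del_half: assumes "n = 2*k+1" "i < n" shows "del n (2*i) (2*((i+k) mod n)+1) = 2*k+1"
proof (cases "i + k < n")
  case True then show ?thesis using assms unfolding del_def Let_def by simp
next
  case False
  then have "(i+k) mod n = i + k - n" using assms by (simp add: le_mod_geq)
  then show ?thesis using assms False unfolding del_def Let_def min_def by simp arith
qed

lemma del_zero: "del n c c = 0" unfolding del_def by simp

lemma lowA: assumes "n = 2*k+1" "i < n"
  shows "k + 4 \<le> U_dist n (A i) (E ((i+k) mod n))"
proof -
  have "A i \<in> U_verts n" "E ((i+k) mod n) \<in> U_verts n" using assms by (auto simp: vA vE)
  then obtain m where "(U_adj n ^^ m) (A i) (E ((i+k) mod n))" using conn by blast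
  from dist_lower[where h="g1 n (2*i)", OF g1_lip[OF assms(2)] this] show ?thesis
    using del_half[OF assms] by (simp add: del_zero)
qed

lemma lowC: assumes "n = 2*k+1" "i < n" "k \<ge> 1"
  shows "k + 2 \<le> U_dist n (C i) (D ((i+k) mod n))"
proof -
  have "C i \<in> U_verts n" "D ((i+k) mod n) \<in> U_verts n" using assms by (auto simp: vC vD)
  then obtain m where "(U_adj n ^^ m) (C i) (D ((i+k) mod n))" using conn by blast
  from dist_lower[where h="g2 n (2*i)", OF g2_lip[OF assms(2)] this] show ?thesis
    using del_half[OF assms(1,2)] assms(3) by (simp add: del_zero)
qed

lemma nbrA: "U_adj n (A i) u \<Longrightarrow> u = A (Suc i mod n) \<or> u = B i \<or> (\<exists>t<n. Suc t mod n = i \<and> u = A t)"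
  unfolding U_adj_def U_edge0_def by auto
lemma nbrE: "U_adj n (E i) u \<Longrightarrow> u = E (Suc i mod n) \<or> u = D i \<or> (\<exists>t<n. Suc t mod n = i \<and> u = E t)"
  unfolding U_adj_def U_edge0_def by auto
lemma nbrC: "U_adj n (C i) u \<Longrightarrow> u = B i \<or> u = D i \<or> (\<exists>t<n. Suc t mod n = i \<and> u = D t)"
  unfolding U_adj_def U_edge0_def by auto
lemma nbrD: "U_adj n (D i) u \<Longrightarrow> u = C i \<or> u = E i \<or> u = C (Suc i mod n)"
  unfolding U_adj_def U_edge0_def by auto

lemma rAB: "t < n \<Longrightarrow> U_adj n (B t) (A t)" using eAB adj_sym by metis
lemma rBC: "t < n \<Longrightarrow> U_adj n (C t) (B t)" using eBC adj_sym by metis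
lemma rCD: "t < n \<Longrightarrow> U_adj n (D t) (C t)" using eCD adj_sym by metis
lemma rDE: "t < n \<Longrightarrow> U_adj n (E t) (D t)" using eDE adj_sym by metis
lemma rCD': "t < n \<Longrightarrow> U_adj n (D t) (C (Suc t mod n))" using eCD' adj_sym by metis

locale cfg =
  fixes n k i :: nat
  assumes nk: "n = 2*k+1" and k1: "k \<ge> 1" and i_lt: "i < n"
begin

definition "j = (i+k) mod n"

lemma j_lt: "j < n" unfolding j_def using nk by simp
lemma sj_lt: "Suc j mod n < n" using nk by simp
lemma si_lt: "Suc i mod n < n" using nk by simp

lemma maxd1: assumes "U_adj n (A i) u" shows "U_dist n (E j) u \<le> U_dist n (E j) (A i)"
proof -
  have low: "k + 4 \<le> U_dist n (E j) (A i)" using lowA[OF nk i_lt] dist_sym unfolding j_def by metis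
  have up: "U_dist n (E j) u \<le> k + 4"
  proof -
    consider "u = A (Suc i mod n)" | "u = B i" | t where "t < n" "Suc t mod n = i" "u = A t"
      using nbrA[OF assms] by blast
    then show ?thesis
    proof cases
      case 1
      have W: "(U_adj n ^^ (k-1)) (A (Suc i mod n)) (A j)"
        using wA[OF si_lt, of "k-1"] M1[OF k1, of i n] unfolding j_def by simp
      note W2 = relpowp_Suc_I[OF relpowp_Suc_I[OF relpowp_Suc_I[OF relpowp_Suc_I[OF W eAB[OF j_lt]] eBC[OF j_lt]] eCD[OF j_lt]] eDE[OF j_lt]]
      show ?thesis using dist_le'[OF W2] 1 by simp
    next
      case 2
      have W: "(U_adj n ^^ k) (B i) (B j)" using wB[OF i_lt, of k] unfolding j_def by simp
      note W2 = relpowp_Suc_I[OF relpowp_Suc_I[OF relpowp_Suc_I[OF W eBC[OF j_lt]] eCD[OF j_lt]] eDE[OF j_lt]]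
      show ?thesis using dist_le'[OF W2] 2 by simp
    next
      case 3
      have W: "(U_adj n ^^ (k-1)) (A (Suc j mod n)) (A t)"
        using wA[OF sj_lt, of "k-1"] M2[OF nk k1 3(1,2)] unfolding j_def by simp
      note W2 = relpowp_Suc_I2[OF rDE[OF j_lt] relpowp_Suc_I2[OF rCD'[OF j_lt] relpowp_Suc_I2[OF rBC[OF sj_lt] relpowp_Suc_I2[OF rAB[OF sj_lt] W]]]]
      show ?thesis using dist_le[OF W2] 3 k1 by simp
    qed
  qed
  show ?thesis using low up by simp
qed

lemma maxd2: assumes "U_adj n (E j) v" shows "U_dist n (A i) v \<le> U_dist n (A i) (E j)"
proof -
  have low: "k + 4 \<le> U_dist n (A i) (E j)" using lowA[OF nk i_lt] unfolding j_def by metis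
  have up: "U_dist n (A i) v \<le> k + 4"
  proof -
    consider "v = E (Suc j mod n)" | "v = D j" | t where "t < n" "Suc t mod n = j" "v = E t"
      using nbrE[OF assms] by blast
    then show ?thesis
    proof cases
      case 1
      have W: "(U_adj n ^^ k) (A (Suc j mod n)) (A i)"
        using wA[OF sj_lt, of k] M3[OF nk i_lt] unfolding j_def by simp
      note W2 = relpowp_Suc_I2[OF rDE[OF sj_lt] relpowp_Suc_I2[OF rCD[OF sj_lt] relpowp_Suc_I2[OF rBC[OF sj_lt] relpowp_Suc_I2[OF rAB[OF sj_lt] W]]]]
      show ?thesis using dist_le'[OF W2] 1 by simp
    next
      case 2
      have W: "(U_adj n ^^ k) (A i) (A j)" using wA[OF i_lt, of k] unfolding j_def by simp
      note W2 = relpowp_Suc_I[OF relpowp_Suc_I[OF relpowp_Suc_I[OF W eAB[OF j_lt]] eBC[OF j_lt]] eCD[OF j_lt]]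
      show ?thesis using dist_le[OF W2] 2 by simp
    next
      case 3
      have W: "(U_adj n ^^ (k-1)) (A i) (A t)"
        using wA[OF i_lt, of "k-1"] M4[OF nk k1 3(1)] 3(2) unfolding j_def by simp
      note W2 = relpowp_Suc_I[OF relpowp_Suc_I[OF relpowp_Suc_I[OF relpowp_Suc_I[OF W eAB[OF 3(1)]] eBC[OF 3(1)]] eCD[OF 3(1)]] eDE[OF 3(1)]]
      show ?thesis using dist_le[OF W2] 3 k1 by simp
    qed
  qed
  show ?thesis using low up by simp
qed

lemma maxd3: assumes "U_adj n (C i) u" shows "U_dist n (D j) u \<le> U_dist n (D j) (C i)"
proof -
  have low: "k + 2 \<le> U_dist n (D j) (C i)" using lowC[OF nk i_lt k1] dist_sym unfolding j_def by metis
  have up: "U_dist n (D j) u \<le> k + 2"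
  proof -
    consider "u = B i" | "u = D i" | t where "t < n" "Suc t mod n = i" "u = D t"
      using nbrC[OF assms] by blast
    then show ?thesis
    proof cases
      case 1
      have W: "(U_adj n ^^ k) (B i) (B j)" using wB[OF i_lt, of k] unfolding j_def by simp
      note W2 = relpowp_Suc_I[OF relpowp_Suc_I[OF W eBC[OF j_lt]] eCD[OF j_lt]]
      show ?thesis using dist_le'[OF W2] 1 by simp
    next
      case 2
      have W: "(U_adj n ^^ k) (E i) (E j)" using wE[OF i_lt, of k] unfolding j_def by simp
      note W2 = relpowp_Suc_I2[OF eDE[OF i_lt] relpowp_Suc_I[OF W rDE[OF j_lt]]]
      show ?thesis using dist_le'[OF W2] 2 by simp
    next
      case 3
      have W: "(U_adj n ^^ k) (E j) (E t)"
        using wE[OF j_lt, of k] M5[OF nk 3(1,2)] unfolding j_def by simp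
      note W2 = relpowp_Suc_I2[OF eDE[OF j_lt] relpowp_Suc_I[OF W rDE[OF 3(1)]]]
      show ?thesis using dist_le[OF W2] 3 by simp
    qed
  qed
  show ?thesis using low up by simp
qed

lemma maxd4: assumes "U_adj n (D j) v" shows "U_dist n (C i) v \<le> U_dist n (C i) (D j)"
proof -
  have low: "k + 2 \<le> U_dist n (C i) (D j)" using lowC[OF nk i_lt k1] unfolding j_def by metis
  have up: "U_dist n (C i) v \<le> k + 2"
  proof -
    consider "v = C j" | "v = E j" | "v = C (Suc j mod n)"
      using nbrD[OF assms] by blast
    then show ?thesis
    proof cases
      case 1
      have W: "(U_adj n ^^ k) (B i) (B j)" using wB[OF i_lt, of k] unfolding j_def by simp
      note W2 = relpowp_Suc_I2[OF rBC[OF i_lt] relpowp_Suc_I[OF W eBC[OF j_lt]]]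
      show ?thesis using dist_le[OF W2] 1 by simp
    next
      case 2
      have W: "(U_adj n ^^ k) (E i) (E j)" using wE[OF i_lt, of k] unfolding j_def by simp
      note W2 = relpowp_Suc_I2[OF eCD[OF i_lt] relpowp_Suc_I2[OF eDE[OF i_lt] W]]
      show ?thesis using dist_le[OF W2] 2 by simp
    next
      case 3
      have W: "(U_adj n ^^ k) (B (Suc j mod n)) (B i)"
        using wB[OF sj_lt, of k] M3[OF nk i_lt] unfolding j_def by simp
      note W2 = relpowp_Suc_I2[OF rBC[OF sj_lt] relpowp_Suc_I[OF W eBC[OF i_lt]]]
      show ?thesis using dist_le'[OF W2] 3 by simp
    qed
  qed
  show ?thesis using low up by simp
qed

lemma forcedAE: assumes "strong_resolving_set n S" shows "A i \<in> S \<or> E j \<in> S"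
proof -
  have V: "A i \<in> U_verts n" "E j \<in> U_verts n" using i_lt j_lt by (auto simp: vA vE)
  obtain w where w: "w \<in> S" "strongly_resolves n w (A i) (E j)"
    using assms V unfolding strong_resolving_set_def by blast
  have wV: "w \<in> U_verts n" using assms w unfolding strong_resolving_set_def by blast
  have "w = A i \<or> w = E j" using pair_forced[OF V wV maxd1 maxd2 w(2)] by blast
  then show ?thesis using w by blast
qed

lemma forcedCD: assumes "strong_resolving_set n S" shows "C i \<in> S \<or> D j \<in> S"
proof -
  have V: "C i \<in> U_verts n" "D j \<in> U_verts n" using i_lt j_lt by (auto simp: vC vD)
  obtain w where w: "w \<in> S" "strongly_resolves n w (C i) (D j)"
    using assms V unfolding strong_resolving_set_def by blast
  have wV: "w \<in> U_verts n" using assms w unfolding strong_resolving_set_def by blast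
  have "w = C i \<or> w = D j" using pair_forced[OF V wV maxd3 maxd4 w(2)] by blast
  then show ?thesis using w by blast
qed

end

lemma finite_verts: "finite (U_verts n)" unfolding U_verts_def by auto

theorem lemma4p5:
  fixes k n :: nat and S :: "vtx set"
  assumes "k \<ge> 1" and "n = 2 * k + 1"
    and "strong_resolving_set n S"
  shows "card S \<ge> 2 * n"
proof -
  have finS: "finite S" using assms(3) finite_verts unfolding strong_resolving_set_def
    by (meson finite_subset)
  have cf: "cfg n k p" if "p < n" for p unfolding cfg_def using assms that by simp
  define sel where "sel p = (if p < n then (if A p \<in> S then A p else E ((p+k) mod n))
      else (if C (p-n) \<in> S then C (p-n) else D ((p-n+k) mod n)))" for p
  have sub: "sel ` {..<2*n} \<subseteq> S"
  proof
    fix x assume "x \<in> sel ` {..<2*n}"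
    then obtain p where p: "p < 2*n" "x = sel p" by auto
    show "x \<in> S"
    proof (cases "p < n")
      case True
      then show ?thesis using cfg.forcedAE[OF cf[OF True] assms(3)] p
        unfolding cfg.j_def[OF cf[OF True]] sel_def by auto
    next
      case False
      then have pn: "p - n < n" using p by simp
      show ?thesis using cfg.forcedCD[OF cf[OF pn] assms(3)] p False
        unfolding cfg.j_def[OF cf[OF pn]] sel_def by auto
    qed
  qed
  define dec where "dec v = (case v of A p \<Rightarrow> p | E t \<Rightarrow> (Suc t mod n + k) mod n
     | C p \<Rightarrow> n + p | D t \<Rightarrow> n + (Suc t mod n + k) mod n | B p \<Rightarrow> 0)" for v
  have dec_sel: "dec (sel p) = p" if "p \<in> {..<2*n}" for p
  proof (cases "p < n")
    case True
    then show ?thesis using M3[OF assms(2) True] unfolding sel_def dec_def by simp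
  next
    case False
    then have pn: "p - n < n" using that by auto
    then show ?thesis using M3[OF assms(2) pn] False unfolding sel_def dec_def by simp
  qed
  have inj: "inj_on sel {..<2*n}" by (rule inj_on_inverseI[where g=dec]) (rule dec_sel)
  have "card (sel ` {..<2*n}) = 2*n" using card_image[OF inj] by simp
  then show ?thesis using card_mono[OF finS sub] by simp
qed

end
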